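(* Let $\Sigma$ be an alphabet with $|\Sigma|\ge 2$, let $n\ge 2$ and $L\ge 1$ be integers, and let $\mathcal{H}$ be a finite family of functions $\Sigma^n\to[0,2^L)$ such that every $h\in\mathcal{H}$ is recursive. Then $\mathcal{H}$ is not $3$-wise trailing-zero independent.
   Context: An $n$-gram is an element $(x_1,\dots,x_n)\in\Sigma^n$. A hash function $h:\Sigma^n\to[0,2^L)$ is recursive if there is a function $F$ (which may depend on $h$) such that $h(x_2,\dots,x_{n+1})=F(h(x_1,\dots,x_n),x_1,x_{n+1})$ for all $x_1,\dots,x_{n+1}\in\Sigma$. For an integer $y\in[0,2^L)$, $\mathrm{zeros}(y)\in\{0,1,\dots,L\}$ denotes the number of trailing zeros in the $L$-bit binary representation of $y$, with $\mathrm{zeros}(0)=L$. With $h$ drawn uniformly at random from $\mathcal{H}$, the family is $k$-wise trailing-zero independent if for all pairwise distinct $n$-grams $x_1,\dots,x_k$ and all $j_1,\dots,j_k\in\{0,1,\dots,L\}$ one has $P(\mathrm{zeros}(h(x_1))\ge j_1\wedge\cdots\wedge \mathrm{zeros}(h(x_k))\ge j_k)=2^{-j_1-\cdots-j_k}$. *)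

theory Defs
  imports Complex_Main "HOL-Library.Multiset"
begin

definition ngrams :: "'a set \<Rightarrow> nat \<Rightarrow> 'a list set" where
  "ngrams \<Sigma> n = {xs. length xs = n \<and> set xs \<subseteq> \<Sigma>}"

definition maps_into_range :: "'a set \<Rightarrow> nat \<Rightarrow> nat \<Rightarrow> ('a list \<Rightarrow> nat) \<Rightarrow> bool" where
  "maps_into_range \<Sigma> n L h \<longleftrightarrow> (\<forall>x \<in> ngrams \<Sigma> n. h x < 2 ^ L)"

definition recursive_hash :: "'a set \<Rightarrow> nat \<Rightarrow> ('a list \<Rightarrow> nat) \<Rightarrow> bool" where
  "recursive_hash \<Sigma> n h \<longleftrightarrow>
     (\<exists>F :: nat \<Rightarrow> 'a \<Rightarrow> 'a \<Rightarrow> nat. \<forall>xs \<in> ngrams \<Sigma> (Suc n).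
        h (tl xs) = F (h (butlast xs)) (hd xs) (last xs))"

text \<open>Number of trailing zeros in the L-bit representation of y; zeros 0 = L.\<close>
definition zeros :: "nat \<Rightarrow> nat \<Rightarrow> nat" where
  "zeros L y = (GREATEST j. j \<le> L \<and> 2 ^ j dvd y)"

text \<open>k-wise trailing-zero independence of a finite family (multiset) H,
  with h drawn uniformly at random from H.\<close>
definition tz_independent ::
  "'a set \<Rightarrow> nat \<Rightarrow> nat \<Rightarrow> nat \<Rightarrow> ('a list \<Rightarrow> nat) multiset \<Rightarrow> bool" where
  "tz_independent \<Sigma> n L k H \<longleftrightarrow>
     (\<forall>x :: nat \<Rightarrow> 'a list. \<forall>j :: nat \<Rightarrow> nat.
        (\<forall>i<k. x i \<in> ngrams \<Sigma> n) \<longrightarrow> inj_on x {..<k} \<longrightarrow> (\<forall>i<k. j i \<le> L) \<longrightarrow>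
        real (size (filter_mset (\<lambda>h. \<forall>i<k. zeros L (h (x i)) \<ge> j i) H)) / real (size H)
          = (1/2::real) ^ (\<Sum>i<k. j i))"

end

theory Submission
  imports Defs
begin

lemma zeros_ge_iff:
  assumes "(y::nat) < 2 ^ L"
  shows "L \<le> zeros L y \<longleftrightarrow> y = 0"
proof
  assume h: "L \<le> zeros L y"
  have P: "zeros L y \<le> L \<and> 2 ^ zeros L y dvd y"
    unfolding zeros_def
    by (rule GreatestI_nat[where k=0 and b=L]) auto
  hence "zeros L y = L" using h by simp
  hence "2 ^ L dvd y" using P by simp
  thus "y = 0" using assms by (metis dvd_imp_le le_antisym less_imp_le_nat nat_neq_iff not_gr0)
next
  assume "y = 0"
  thus "L \<le> zeros L y" unfolding zeros_def
    by (intro Greatest_le_nat[where b=L]) auto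
qed

lemma butlast_rep: "butlast (replicate (Suc k) c) = replicate k c"
  by (induction k) auto

theorem mainTheorem1:
  fixes \<Sigma> :: "'a set" and n L :: nat and H :: "('a list \<Rightarrow> nat) multiset"
  assumes "\<exists>a\<in>\<Sigma>. \<exists>b\<in>\<Sigma>. a \<noteq> b"
    and "n \<ge> 2" and "L \<ge> 1"
    and "H \<noteq> {#}"
    and "\<forall>h \<in># H. maps_into_range \<Sigma> n L h"
    and "\<forall>h \<in># H. recursive_hash \<Sigma> n h"
  shows "\<not> tz_independent \<Sigma> n L 3 H"
proof
  assume ind: "tz_independent \<Sigma> n L 3 H"
  obtain a b where ab: "a \<in> \<Sigma>" "b \<in> \<Sigma>" "a \<noteq> b" using assms(1) by blast
  obtain m where n: "n = Suc (Suc m)" using assms(2) by (metis add_2_eq_Suc le_Suc_ex)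
  define x1 where "x1 = a # replicate (Suc m) b"
  define x2 where "x2 = a # a # replicate m b"
  define x3 where "x3 = replicate (Suc (Suc m)) b"
  define x where "x = (\<lambda>i::nat. if i = 0 then x1 else if i = 1 then x2 else x3)"
  have ng: "x1 \<in> ngrams \<Sigma> n" "x2 \<in> ngrams \<Sigma> n" "x3 \<in> ngrams \<Sigma> n"
    using ab by (auto simp: ngrams_def x1_def x2_def x3_def n)
  have xin: "\<forall>i<3. x i \<in> ngrams \<Sigma> n" using ng by (auto simp: x_def)
  have inj: "inj_on x {..<3}"
  proof -
    have "x1 \<noteq> x2" using ab by (cases m) (auto simp: x1_def x2_def)
    moreover have "x1 \<noteq> x3" using ab by (auto simp: x1_def x3_def)
    moreover have "x2 \<noteq> x3" using ab by (auto simp: x2_def x3_def)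
    ultimately show ?thesis unfolding inj_on_def x_def
      by (auto simp: less_Suc_eq numeral_3_eq_3)
  qed
  have key: "(\<forall>i<3. zeros L (h (x i)) \<ge> (\<lambda>i. L) i) \<longleftrightarrow>
             (\<forall>i<3. zeros L (h (x i)) \<ge> (\<lambda>i. if i = 2 then 0 else L) i)"
    if hH: "h \<in># H" for h
  proof -
    have rng: "h x1 < 2^L" "h x2 < 2^L" "h x3 < 2^L"
      using assms(5) hH ng by (auto simp: maps_into_range_def)
    obtain F where F: "\<forall>xs \<in> ngrams \<Sigma> (Suc n). h (tl xs) = F (h (butlast xs)) (hd xs) (last xs)"
      using assms(6) hH by (auto simp: recursive_hash_def)
    have s1: "a # replicate (Suc (Suc m)) b \<in> ngrams \<Sigma> (Suc n)"
      "a # a # replicate (Suc m) b \<in> ngrams \<Sigma> (Suc n)"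
      using ab by (auto simp: ngrams_def n)
    have e1: "h x3 = F (h x1) a b"
      using F[rule_format, OF s1(1)]
      by (simp only: x1_def x3_def list.sel butlast.simps butlast_rep last_ConsR last_replicate)
         (simp add: x3_def)
    have e2: "h x1 = F (h x2) a b"
      using F[rule_format, OF s1(2)]
      by (simp only: x1_def x2_def list.sel butlast.simps butlast_rep last_ConsR last_replicate)
         simp
    have imp: "h x1 = 0 \<Longrightarrow> h x2 = 0 \<Longrightarrow> h x3 = 0" using e1 e2 by simp
    have "(\<forall>i<3. zeros L (h (x i)) \<ge> L) \<longleftrightarrow> h x1 = 0 \<and> h x2 = 0 \<and> h x3 = 0"
      using zeros_ge_iff[OF rng(1)] zeros_ge_iff[OF rng(2)] zeros_ge_iff[OF rng(3)]
      by (auto simp: x_def less_Suc_eq numeral_3_eq_3)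
    moreover have "(\<forall>i<3. zeros L (h (x i)) \<ge> (if i = 2 then 0 else L)) \<longleftrightarrow> h x1 = 0 \<and> h x2 = 0"
      using zeros_ge_iff[OF rng(1)] zeros_ge_iff[OF rng(2)]
      by (auto simp: x_def less_Suc_eq numeral_3_eq_3)
    ultimately show ?thesis using imp by auto
  qed
  have eqf: "filter_mset (\<lambda>h. \<forall>i<3. zeros L (h (x i)) \<ge> (\<lambda>i. L) i) H
           = filter_mset (\<lambda>h. \<forall>i<3. zeros L (h (x i)) \<ge> (\<lambda>i. if i = 2 then 0 else L) i) H"
    by (rule filter_mset_cong) (use key in auto)
  have A: "real (size (filter_mset (\<lambda>h. \<forall>i<3. zeros L (h (x i)) \<ge> (\<lambda>i. L) i) H)) / real (size H)
      = (1/2::real) ^ (\<Sum>i::nat<3. (\<lambda>i. L) i)"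
    using ind xin inj unfolding tz_independent_def by auto
  have B: "real (size (filter_mset (\<lambda>h. \<forall>i<3. zeros L (h (x i)) \<ge> (\<lambda>i. if i = 2 then 0 else L) i) H)) / real (size H)
      = (1/2::real) ^ (\<Sum>i::nat<3. (\<lambda>i. if i = 2 then 0 else L) i)"
    using ind xin inj unfolding tz_independent_def by auto
  have s3: "(\<Sum>i<3. (\<lambda>i::nat. L) i) = 3 * L" by simp
  have s2: "(\<Sum>i<3. (\<lambda>i::nat. if i = 2 then 0 else L) i) = 2 * L"
    by (simp add: numeral_3_eq_3)
  have "(1/2::real) ^ (3*L) = (1/2) ^ (2*L)" using A B eqf s3 s2 by simp
  moreover have "(1/2::real) ^ (3*L) < (1/2) ^ (2*L)"
    using assms(3) by (intro power_strict_decreasing) auto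
  ultimately show False by simp
qed

end
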